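(* Fix $q\in\mathbb R$ and $x,y\in\mathbb R^n$. Then (i) for every $T>0$ the set $\mathcal A^{xy}_T(q)$ is nonempty; (ii) there exist $T_0,C\in(0,\infty)$, depending on $q,x,y$, such that $S^{xy}_T(q)\le C\,T$ for all $T\ge T_0$.
   Context: Standing assumptions: $V\in C^2(\mathbb R^n;\mathbb R)$ satisfies $\lim_{|x|\to\infty}\langle\nabla V(x),x\rangle/|x|=+\infty$; $b:\mathbb R^n\to\mathbb R^n$ is a $C^1$, bounded vector field with bounded first derivatives, not conservative (not a gradient field); and $\langle\nabla V(x),b(x)\rangle=0$ for every $x$. Set $c:=-\tfrac12\nabla V+b$. For $T>0$: $H_T$ is the set of absolutely continuous $\varphi:[0,T]\to\mathbb R^n$ with $\int_0^T|\dot\varphi_t|^2dt<\infty$, $H^x_T:=\{\varphi\in H_T:\varphi_0=x\}$; $I^x_T(\varphi):=\frac12\int_0^T|\dot\varphi_t-c(\varphi_t)|^2dt$ for $\varphi\in H^x_T$; $\mathcal L_T(\varphi):=\frac2T\int_0^T\langle b(\varphi_t),\dot\varphi_t\rangle dt$; $\mathcal A^{xy}_T(q):=\{\varphi\in H^x_T:\varphi_T=y,\ \mathcal L_T(\varphi)=q\}$; $S^{xy}_T(q):=\inf\{I^x_T(\varphi):\varphi\in\mathcal A^{xy}_T(q)\}$. *)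

theory Defs
  imports "HOL-Analysis.Analysis"
begin

definition abs_cont_on :: "real set \<Rightarrow> (real \<Rightarrow> 'a::real_normed_vector) \<Rightarrow> bool" where
  "abs_cont_on S f \<longleftrightarrow>
     (\<forall>\<epsilon>>0. \<exists>\<delta>>0. \<forall>(n::nat) (a::nat \<Rightarrow> real) (b::nat \<Rightarrow> real).
        (\<forall>i<n. a i \<le> b i \<and> {a i..b i} \<subseteq> S) \<and>
        (\<forall>i<n. \<forall>j<n. i \<noteq> j \<longrightarrow> b i \<le> a j \<or> b j \<le> a i) \<and>
        (\<Sum>i<n. b i - a i) < \<delta>
        \<longrightarrow> (\<Sum>i<n. norm (f (b i) - f (a i))) < \<epsilon>)"

definition pdot :: "real \<Rightarrow> (real \<Rightarrow> 'a::real_normed_vector) \<Rightarrow> real \<Rightarrow> 'a" where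
  "pdot T \<phi> t = vector_derivative \<phi> (at t within {0..T})"

definition C1_map :: "('a::euclidean_space \<Rightarrow> 'b::euclidean_space) \<Rightarrow> bool" where
  "C1_map g \<longleftrightarrow> (\<exists>g'::'a \<Rightarrow> 'a \<Rightarrow>\<^sub>L 'b.
      (\<forall>x. (g has_derivative blinfun_apply (g' x)) (at x)) \<and> continuous_on UNIV g')"

definition H_space :: "real \<Rightarrow> (real \<Rightarrow> 'a::euclidean_space) set" where
  "H_space T = {\<phi>. abs_cont_on {0..T} \<phi> \<and>
                    (\<lambda>t. (norm (pdot T \<phi> t))\<^sup>2) integrable_on {0..T}}"

definition H_space_from :: "real \<Rightarrow> 'a::euclidean_space \<Rightarrow> (real \<Rightarrow> 'a) set" where
  "H_space_from T x = {\<phi> \<in> H_space T. \<phi> 0 = x}"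

definition rate_I :: "('a::euclidean_space \<Rightarrow> 'a) \<Rightarrow> real \<Rightarrow> (real \<Rightarrow> 'a) \<Rightarrow> real" where
  "rate_I c T \<phi> = (1/2) * integral {0..T} (\<lambda>t. (norm (pdot T \<phi> t - c (\<phi> t)))\<^sup>2)"

definition L_fun :: "('a::euclidean_space \<Rightarrow> 'a) \<Rightarrow> real \<Rightarrow> (real \<Rightarrow> 'a) \<Rightarrow> real" where
  "L_fun b T \<phi> = (2 / T) * integral {0..T} (\<lambda>t. b (\<phi> t) \<bullet> pdot T \<phi> t)"

definition A_set :: "('a::euclidean_space \<Rightarrow> 'a) \<Rightarrow> real \<Rightarrow> 'a \<Rightarrow> 'a \<Rightarrow> real \<Rightarrow> (real \<Rightarrow> 'a) set" where
  "A_set b T x y q = {\<phi> \<in> H_space_from T x. \<phi> T = y \<and> L_fun b T \<phi> = q}"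

definition S_fun :: "('a::euclidean_space \<Rightarrow> 'a) \<Rightarrow> ('a \<Rightarrow> 'a) \<Rightarrow> real \<Rightarrow> 'a \<Rightarrow> 'a \<Rightarrow> real \<Rightarrow> real" where
  "S_fun c b T x y q = Inf (rate_I c T ` A_set b T x y q)"

end

theory Submission
  imports Defs
begin


definition seg :: "('a::euclidean_space \<Rightarrow> 'a) \<Rightarrow> 'a \<Rightarrow> 'a \<Rightarrow> real" where
  "seg b p q = integral {0..1} (\<lambda>r. b (p + r *\<^sub>R (q - p)) \<bullet> (q - p))"

lemma seg_integrable:
  assumes cb: "continuous_on UNIV b"
  shows "(\<lambda>r. b (p + r *\<^sub>R (q - p)) \<bullet> (q - p)) integrable_on {0..1}"
proof -
  have "continuous_on {0..1} (\<lambda>r. b (p + r *\<^sub>R (q - p)))"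
    by (rule continuous_on_compose2[OF cb]) (auto intro!: continuous_intros)
  then show ?thesis by (intro integrable_continuous_interval continuous_intros)
qed

lemma seg_same: "seg b p p = 0"
  by (simp add: seg_def)

lemma seg_rev:
  assumes cb: "continuous_on UNIV b"
  shows "seg b q p = - seg b p q"
proof -
  define f where "f r = b (p + r *\<^sub>R (q - p)) \<bullet> (q - p)" for r
  have "(f has_integral seg b p q) (cbox 0 1)"
    using seg_integrable[OF cb, of p q] unfolding f_def seg_def by (simp add: integrable_integral)
  from has_integral_affinity[OF this, of "-1" 1]
  have "((\<lambda>x. f (1 - x)) has_integral seg b p q) {0..1}"
    by (simp add: image_affinity_atLeastAtMost)
  then have "((\<lambda>x. - f (1 - x)) has_integral - seg b p q) {0..1}"
    by (rule has_integral_neg)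
  moreover have "- f (1 - x) = b (q + x *\<^sub>R (p - q)) \<bullet> (p - q)" for x
  proof -
    have "p + (1 - x) *\<^sub>R (q - p) = q + x *\<^sub>R (p - q)" by (simp add: algebra_simps)
    then show ?thesis unfolding f_def by (simp add: inner_minus_right[symmetric] algebra_simps)
  qed
  ultimately show ?thesis unfolding seg_def by (simp add: integral_unique)
qed

lemma int_abs_bound:
  fixes f :: "real \<Rightarrow> real"
  assumes "f integrable_on {a..b}" "a \<le> b" "\<And>x. x \<in> {a..b} \<Longrightarrow> \<bar>f x\<bar> \<le> K"
  shows "\<bar>integral {a..b} f\<bar> \<le> K * (b - a)"
proof -
  have "integral {a..b} f \<le> integral {a..b} (\<lambda>x. K)"
    using assms by (intro integral_le) (auto simp: abs_le_iff)
  moreover have "integral {a..b} (\<lambda>x. - K) \<le> integral {a..b} f"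
    using assms by (intro integral_le) (auto simp: abs_le_iff, smt (verit))
  ultimately show ?thesis using assms(2) by (simp add: algebra_simps)
qed

lemma seg_lip:
  assumes cb: "continuous_on UNIV b"
    and Lb: "\<And>u v. norm (b u - b v) \<le> Lb * norm (u - v)"
    and B: "\<And>u. norm (b u) \<le> B" and Lb0: "Lb \<ge> 0"
  shows "\<bar>seg b p q - seg b p' q'\<bar> \<le> (Lb * norm (q - p) + B) * (norm (p - p') + norm (q - q'))"
proof -
  let ?f = "\<lambda>r. b (p + r *\<^sub>R (q - p)) \<bullet> (q - p)"
  let ?g = "\<lambda>r. b (p' + r *\<^sub>R (q' - p')) \<bullet> (q' - p')"
  let ?K = "(Lb * norm (q - p) + B) * (norm (p - p') + norm (q - q'))"
  have "seg b p q - seg b p' q' = integral {0..1} (\<lambda>r. ?f r - ?g r)"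
    unfolding seg_def by (simp add: integral_diff seg_integrable[OF cb])
  also have "\<bar>\<dots>\<bar> \<le> ?K * (1 - 0)"
  proof (rule int_abs_bound)
    show "(\<lambda>r. ?f r - ?g r) integrable_on {0..1}"
      by (intro integrable_diff seg_integrable[OF cb])
    show "(0::real) \<le> 1" by simp
    fix r :: real assume r: "r \<in> {0..1}"
    define P where "P = p + r *\<^sub>R (q - p)"
    define P' where "P' = p' + r *\<^sub>R (q' - p')"
    have "P - P' = (1 - r) *\<^sub>R (p - p') + r *\<^sub>R (q - q')"
      unfolding P_def P'_def by (simp add: algebra_simps)
    then have "norm (P - P') \<le> (1 - r) * norm (p - p') + r * norm (q - q')"
      using r by (metis (no_types, lifting) abs_of_nonneg atLeastAtMost_iff diff_ge_0_iff_ge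
          norm_scaleR norm_triangle_ineq order_trans)
    also have "\<dots> \<le> norm (p - p') + norm (q - q')"
      using r by (smt (verit, best) atLeastAtMost_iff mult_left_le_one_le norm_ge_zero)
    finally have PP: "norm (P - P') \<le> norm (p - p') + norm (q - q')" .
    have "?f r - ?g r = (b P - b P') \<bullet> (q - p) + b P' \<bullet> ((p' - p) + (q - q'))"
      unfolding P_def P'_def by (simp add: algebra_simps)
    also have "\<bar>\<dots>\<bar> \<le> norm (b P - b P') * norm (q - p) + norm (b P') * norm ((p' - p) + (q - q'))"
      by (smt (verit) Cauchy_Schwarz_ineq2)
    also have "\<dots> \<le> (Lb * (norm (p - p') + norm (q - q'))) * norm (q - p) + B * (norm (p - p') + norm (q - q'))"
    proof (intro add_mono mult_mono)
      show "norm (b P - b P') \<le> Lb * (norm (p - p') + norm (q - q'))"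
        using Lb[of P P'] PP Lb0 by (smt (verit) mult_left_mono)
      show "norm (p' - p + (q - q')) \<le> norm (p - p') + norm (q - q')"
        by (metis norm_minus_commute norm_triangle_ineq)
    qed (use B[of 0] B[of P'] Lb0 in \<open>auto intro: order_trans[OF norm_ge_zero]\<close>)
    finally show "\<bar>?f r - ?g r\<bar> \<le> ?K" by (simp add: algebra_simps)
  qed
  also have "\<dots> = ?K" by simp
  finally show ?thesis .
qed



lemma seg_deriv_bound:
  assumes cb: "continuous_on UNIV b"
    and Lb: "\<And>u v. norm (b u - b v) \<le> Lb * norm (u - v)" and Lb0: "Lb \<ge> 0"
  shows "\<bar>seg b z (z + h) - b z \<bullet> h\<bar> \<le> Lb * (norm h)\<^sup>2"
proof -
  have "seg b z (z + h) - b z \<bullet> h = integral {0..1} (\<lambda>r. b (z + r *\<^sub>R h) \<bullet> h - b z \<bullet> h)"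
    using seg_integrable[OF cb, of z "z + h"]
    by (subst integral_diff) (auto simp: seg_def)
  also have "\<bar>\<dots>\<bar> \<le> (Lb * (norm h)\<^sup>2) * (1 - 0)"
  proof (rule int_abs_bound)
    show "(\<lambda>r. b (z + r *\<^sub>R h) \<bullet> h - b z \<bullet> h) integrable_on {0..1}"
      using seg_integrable[OF cb, of z "z + h"] by (intro integrable_diff) auto
    fix r :: real assume r: "r \<in> {0..1}"
    have "\<bar>b (z + r *\<^sub>R h) \<bullet> h - b z \<bullet> h\<bar> = \<bar>(b (z + r *\<^sub>R h) - b z) \<bullet> h\<bar>"
      by (simp add: inner_diff_left)
    also have "\<dots> \<le> norm (b (z + r *\<^sub>R h) - b z) * norm h"
      by (rule Cauchy_Schwarz_ineq2)
    also have "\<dots> \<le> (Lb * norm h) * norm h"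
    proof (rule mult_right_mono)
      have "norm (b (z + r *\<^sub>R h) - b z) \<le> Lb * norm (r *\<^sub>R h)"
        using Lb[of "z + r *\<^sub>R h" z] by simp
      also have "\<dots> \<le> Lb * norm h"
        using r Lb0 by (auto intro!: mult_left_mono simp: mult_left_le_one_le)
      finally show "norm (b (z + r *\<^sub>R h) - b z) \<le> Lb * norm h" .
    qed simp
    finally show "\<bar>b (z + r *\<^sub>R h) \<bullet> h - b z \<bullet> h\<bar> \<le> Lb * (norm h)\<^sup>2"
      by (simp add: power2_eq_square mult.assoc)
  qed simp
  finally show ?thesis by simp
qed

lemma nonconservative_triangle:
  assumes cb: "continuous_on UNIV b"
    and Lb: "\<And>u v. norm (b u - b v) \<le> Lb * norm (u - v)" and Lb0: "Lb \<ge> 0"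
    and nc: "\<not> (\<exists>U::'a::euclidean_space \<Rightarrow> real. \<forall>z. (U has_derivative (\<lambda>h. b z \<bullet> h)) (at z))"
  shows "\<exists>z1 z2. seg b y z1 + seg b z1 z2 + seg b z2 y \<noteq> 0"
proof (rule ccontr)
  assume "\<not> ?thesis"
  then have tri: "\<And>z1 z2. seg b y z1 + seg b z1 z2 + seg b z2 y = 0" by auto
  define U where "U z = seg b y z" for z
  have "(U has_derivative (\<lambda>h. b z \<bullet> h)) (at z)" for z
    unfolding has_derivative_at_alt
  proof (intro conjI allI impI)
    show "bounded_linear (\<lambda>h. b z \<bullet> h)" by (rule bounded_linear_inner_right)
    fix e :: real assume e: "e > 0"
    show "\<exists>d>0. \<forall>w. norm (w - z) < d \<longrightarrow> norm (U w - U z - b z \<bullet> (w - z)) \<le> e * norm (w - z)"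
    proof (intro exI[of _ "e / (Lb + 1)"] conjI allI impI)
      show "e / (Lb + 1) > 0" using e Lb0 by simp
      fix w assume w: "norm (w - z) < e / (Lb + 1)"
      define h where "h = w - z"
      have "U w - U z = seg b z (z + h)"
        using tri[of z "z + h"] seg_rev[OF cb, of y "z + h"] unfolding U_def h_def by simp
      then have "norm (U w - U z - b z \<bullet> (w - z)) \<le> Lb * (norm h)\<^sup>2"
        using seg_deriv_bound[OF cb Lb Lb0, of z h] unfolding h_def by simp
      also have "\<dots> = (Lb * norm h) * norm h" by (simp add: power2_eq_square)
      also have "\<dots> \<le> e * norm h"
      proof (rule mult_right_mono)
        have "Lb * norm h \<le> Lb * (e / (Lb + 1))"
          using w Lb0 unfolding h_def by (intro mult_left_mono) auto
        also have "\<dots> \<le> e" using Lb0 e by (simp add: field_simps)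
        finally show "Lb * norm h \<le> e" .
      qed simp
      finally show "norm (U w - U z - b z \<bullet> (w - z)) \<le> e * norm (w - z)" unfolding h_def .
    qed
  qed
  then show False using nc by blast
qed



definition clamp01 :: "real \<Rightarrow> real" where "clamp01 u = max 0 (min 1 u)"

definition pgon :: "real \<Rightarrow> nat \<Rightarrow> (nat \<Rightarrow> 'a::real_normed_vector) \<Rightarrow> real \<Rightarrow> 'a" where
  "pgon T M v t = v 0 + (\<Sum>k<M. clamp01 (t * real M / T - real k) *\<^sub>R (v (Suc k) - v k))"

lemma clamp01_lip: "\<bar>clamp01 a - clamp01 b\<bar> \<le> \<bar>a - b\<bar>"
  by (auto simp: clamp01_def max_def min_def)

lemma pgon_piece_aux:
  fixes v :: "nat \<Rightarrow> 'a::real_normed_vector"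
  assumes "j < M" "real j \<le> s" "s \<le> real j + 1"
  shows "v 0 + (\<Sum>k<M. clamp01 (s - real k) *\<^sub>R (v (Suc k) - v k)) = v j + (s - real j) *\<^sub>R (v (Suc j) - v j)"
proof -
  define f where "f k = clamp01 (s - real k) *\<^sub>R (v (Suc k) - v k)" for k
  have "(\<Sum>k<M. f k) = (\<Sum>k\<in>{0..<j}. f k) + (\<Sum>k\<in>{j..<M}. f k)"
    using assms(1) by (simp add: lessThan_atLeast0 sum.atLeastLessThan_concat)
  also have "(\<Sum>k\<in>{j..<M}. f k) = f j + (\<Sum>k\<in>{Suc j..<M}. f k)"
    using assms(1) by (simp add: sum.atLeast_Suc_lessThan)
  also have "(\<Sum>k\<in>{Suc j..<M}. f k) = 0"
  proof (rule sum.neutral, clarify)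
    fix k assume "k \<in> {Suc j..<M}"
    then have "s - real k \<le> 0" using assms by auto
    then show "f k = 0" by (simp add: f_def clamp01_def)
  qed
  also have "(\<Sum>k\<in>{0..<j}. f k) = (\<Sum>k<j. v (Suc k) - v k)"
  proof -
    have "f k = v (Suc k) - v k" if "k < j" for k
    proof -
      have "s - real k \<ge> 1" using that assms by auto
      then show ?thesis by (simp add: f_def clamp01_def)
    qed
    then show ?thesis by (simp add: lessThan_atLeast0)
  qed
  also have "\<dots> = v j - v 0" by (rule sum_lessThan_telescope)
  also have "f j = (s - real j) *\<^sub>R (v (Suc j) - v j)"
    using assms by (simp add: f_def clamp01_def)
  finally show ?thesis unfolding f_def by (simp add: algebra_simps)
qed

lemma pgon_piece:
  fixes v :: "nat \<Rightarrow> 'a::real_normed_vector"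
  assumes T: "T > 0" and "j < M" "real j * T / real M \<le> t" "t \<le> real (Suc j) * T / real M"
  shows "pgon T M v t = v j + (t * real M / T - real j) *\<^sub>R (v (Suc j) - v j)"
proof -
  have M: "real M > 0" using assms by simp
  have "real j \<le> t * real M / T" using assms(3) T M by (simp add: field_simps)
  moreover have "t * real M / T \<le> real j + 1" using assms(4) T M by (simp add: field_simps)
  ultimately show ?thesis unfolding pgon_def using pgon_piece_aux[OF assms(2)] by blast
qed

lemma pgon_0: "pgon T M v 0 = v 0"
  by (simp add: pgon_def clamp01_def)

lemma pgon_T:
  assumes "T > 0"
  shows "pgon T M v T = v M"
proof -
  have "clamp01 (T * real M / T - real k) = 1" if "k < M" for k
    using that assms by (simp add: clamp01_def)
  then have "pgon T M v T = v 0 + (\<Sum>k<M. v (Suc k) - v k)"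
    unfolding pgon_def by (intro arg_cong2[where f="(+)"] sum.cong) auto
  then show ?thesis by (simp add: sum_lessThan_telescope)
qed


lemma pgon_lip:
  fixes v :: "nat \<Rightarrow> 'a::real_normed_vector"
  assumes T: "T > 0"
  shows "norm (pgon T M v t - pgon T M v t') \<le> (real M / T * (\<Sum>k<M. norm (v (Suc k) - v k))) * \<bar>t - t'\<bar>"
proof -
  have "pgon T M v t - pgon T M v t' = (\<Sum>k<M. (clamp01 (t * real M / T - real k) - clamp01 (t' * real M / T - real k)) *\<^sub>R (v (Suc k) - v k))"
    unfolding pgon_def by (simp add: sum_subtractf scaleR_diff_left)
  also have "norm \<dots> \<le> (\<Sum>k<M. norm ((clamp01 (t * real M / T - real k) - clamp01 (t' * real M / T - real k)) *\<^sub>R (v (Suc k) - v k)))"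
    by (rule norm_sum)
  also have "\<dots> \<le> (\<Sum>k<M. (real M / T * \<bar>t - t'\<bar>) * norm (v (Suc k) - v k))"
  proof (rule sum_mono)
    fix k
    have c1: "\<bar>clamp01 (t * real M / T - real k) - clamp01 (t' * real M / T - real k)\<bar> \<le> \<bar>(t * real M / T - real k) - (t' * real M / T - real k)\<bar>"
      by (rule clamp01_lip)
    have e1: "(t * real M / T - real k) - (t' * real M / T - real k) = real M / T * (t - t')"
      by (simp add: algebra_simps diff_divide_distrib)
    have e2: "\<bar>real M / T * (t - t')\<bar> = real M / T * \<bar>t - t'\<bar>"
      using T by (simp add: abs_mult)
    show "norm ((clamp01 (t * real M / T - real k) - clamp01 (t' * real M / T - real k)) *\<^sub>R (v (Suc k) - v k)) \<le> (real M / T * \<bar>t - t'\<bar>) * norm (v (Suc k) - v k)"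
      unfolding norm_scaleR using c1 e1 e2 by (intro mult_right_mono) auto
  qed
  also have "\<dots> = (real M / T * (\<Sum>k<M. norm (v (Suc k) - v k))) * \<bar>t - t'\<bar>"
    by (simp add: sum_distrib_left sum_distrib_right mult_ac)
  finally show ?thesis .
qed


lemma lip_abs_cont:
  fixes f :: "real \<Rightarrow> 'a::real_normed_vector"
  assumes lip: "\<And>t t'. norm (f t - f t') \<le> L * \<bar>t - t'\<bar>" and L: "L \<ge> 0"
  shows "abs_cont_on S f"
  unfolding abs_cont_on_def
proof (intro allI impI)
  fix e :: real assume e: "e > 0"
  show "\<exists>d>0. \<forall>n a b. (\<forall>i<n. a i \<le> b i \<and> {a i..b i} \<subseteq> S) \<and>
              (\<forall>i<n. \<forall>j<n. i \<noteq> j \<longrightarrow> b i \<le> a j \<or> b j \<le> a i) \<and> (\<Sum>i<n. b i - a i) < d \<longrightarrow>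
              (\<Sum>i<n. norm (f (b i) - f (a i))) < e"
  proof (intro exI[of _ "e / (L + 1)"] conjI allI impI)
    show "e / (L + 1) > 0" using e L by simp
    fix n a b assume H: "(\<forall>i<n. a i \<le> b i \<and> {a i..b i} \<subseteq> S) \<and>
              (\<forall>i<n. \<forall>j<n. i \<noteq> j \<longrightarrow> b i \<le> a j \<or> b j \<le> a i) \<and> (\<Sum>i<n. b i - a i) < e / (L + 1)"
    have "(\<Sum>i<n. norm (f (b i) - f (a i))) \<le> (\<Sum>i<n. L * (b i - a i))"
    proof (rule sum_mono)
      fix i assume "i \<in> {..<n}"
      then have "a i \<le> b i" using H by auto
      then show "norm (f (b i) - f (a i)) \<le> L * (b i - a i)" using lip[of "b i" "a i"] by simp
    qed
    also have "\<dots> = L * (\<Sum>i<n. b i - a i)" by (simp add: sum_distrib_left)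
    also have "\<dots> \<le> L * (e / (L + 1))" using H L by (intro mult_left_mono) auto
    also have "\<dots> < e" using L e by (simp add: field_simps)
    finally show "(\<Sum>i<n. norm (f (b i) - f (a i))) < e" .
  qed
qed

lemma pgon_abs_cont:
  assumes "T > 0"
  shows "abs_cont_on S (pgon T M v)"
  by (rule lip_abs_cont[OF pgon_lip[OF assms]]) (use assms in \<open>auto intro!: divide_nonneg_pos mult_nonneg_nonneg sum_nonneg\<close>)

lemma pgon_pdot:
  fixes v :: "nat \<Rightarrow> 'a::euclidean_space"
  assumes T: "T > 0" and j: "j < M" and t: "real j * T / real M < t" "t < real (Suc j) * T / real M"
  shows "pdot T (pgon T M v) t = (real M / T) *\<^sub>R (v (Suc j) - v j)"
proof -
  have M: "real M > 0" using j by simp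
  define Op where "Op = {real j * T / real M <..< real (Suc j) * T / real M}"
  define aff where "aff t = v j + (t * real M / T - real j) *\<^sub>R (v (Suc j) - v j)" for t
  have "(aff has_vector_derivative (real M / T) *\<^sub>R (v (Suc j) - v j)) (at t)"
    unfolding aff_def using T by (auto intro!: derivative_eq_intros)
  then have "(pgon T M v has_vector_derivative (real M / T) *\<^sub>R (v (Suc j) - v j)) (at t)"
  proof (rule has_vector_derivative_transform_within_open[where S=Op])
    show "open Op" "t \<in> Op" using t by (auto simp: Op_def)
    fix y assume "y \<in> Op"
    then show "aff y = pgon T M v y"
      unfolding aff_def Op_def by (subst pgon_piece[OF T j]) auto
  qed
  then have D: "(pgon T M v has_vector_derivative (real M / T) *\<^sub>R (v (Suc j) - v j)) (at t within {0..T})"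
    by (rule has_vector_derivative_at_within)
  have tin: "t \<in> {0..T}"
  proof -
    have "0 \<le> real j * T / real M" using T M by simp
    moreover have "real (Suc j) * T / real M \<le> T"
    proof -
      have "real (Suc j) \<le> real M" using j by simp
      then have "real (Suc j) * T \<le> T * real M" using T by (simp add: mult.commute mult_left_mono)
      then show ?thesis using M by (simp add: pos_divide_le_eq)
    qed
    ultimately show ?thesis using t by auto
  qed
  show ?thesis unfolding pdot_def
    by (rule vector_derivative_within_closed_interval[OF T tin D])
qed



lemma piecewise_has_integral:
  fixes h :: "real \<Rightarrow> real" and F :: "nat \<Rightarrow> real \<Rightarrow> real"
  assumes T: "T > 0" and M: "M > 0"
    and cont: "\<And>k. k < M \<Longrightarrow> continuous_on {real k * T / real M .. real (Suc k) * T / real M} (F k)"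
    and eq: "\<And>k t. k < M \<Longrightarrow> real k * T / real M < t \<Longrightarrow> t < real (Suc k) * T / real M \<Longrightarrow> h t = F k t"
  shows "(h has_integral (\<Sum>k<M. integral {real k * T / real M .. real (Suc k) * T / real M} (F k))) {0..T}"
proof -
  have "m \<le> M \<Longrightarrow> (h has_integral (\<Sum>k<m. integral {real k * T / real M .. real (Suc k) * T / real M} (F k))) {0..real m * T / real M}" for m
  proof (induction m)
    case 0 show ?case by (simp add: has_integral_refl)
  next
    case (Suc m)
    define a where "a = real m * T / real M"
    define c where "c = real (Suc m) * T / real M"
    have i1: "(h has_integral (\<Sum>k<m. integral {real k * T / real M .. real (Suc k) * T / real M} (F k))) {0..a}"
      using Suc unfolding a_def by simp
    have "(F m has_integral integral {a..c} (F m)) {a..c}"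
      using cont[of m] Suc.prems unfolding a_def c_def by (simp add: integrable_continuous_interval integrable_integral)
    then have i2: "(h has_integral integral {a..c} (F m)) {a..c}"
    proof (rule has_integral_spike_finite[rotated 2])
      show "finite {a, c}" by simp
      fix x assume "x \<in> {a..c} - {a, c}"
      then show "h x = F m x" using eq[of m x] Suc.prems unfolding a_def c_def by auto
    qed
    have "0 \<le> a" using T M unfolding a_def by simp
    moreover have "a \<le> c" using T M unfolding a_def c_def by (simp add: divide_right_mono)
    ultimately have "(h has_integral (\<Sum>k<m. integral {real k * T / real M .. real (Suc k) * T / real M} (F k)) + integral {a..c} (F m)) {0..c}"
      by (rule has_integral_combine[OF _ _ i1 i2])
    then show ?case unfolding a_def c_def by simp
  qed
  from this[of M] show ?thesis using M by simp
qed

lemma seg_piece: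
  assumes cb: "continuous_on UNIV b" and T: "T > 0" and M: "M > 0"
  shows "((\<lambda>t. b (p + (t * real M / T - real k) *\<^sub>R (q - p)) \<bullet> ((real M / T) *\<^sub>R (q - p)))
           has_integral seg b p q) {real k * T / real M .. real (Suc k) * T / real M}"
proof -
  define m where "m = real M / T"
  have m: "m > 0" using T M by (simp add: m_def)
  define f where "f r = b (p + r *\<^sub>R (q - p)) \<bullet> (q - p)" for r
  have "(f has_integral seg b p q) (cbox 0 1)"
    using seg_integrable[OF cb, of p q] unfolding f_def seg_def by (simp add: integrable_integral)
  from has_integral_affinity[OF this, of m "- real k"] m
  have "((\<lambda>x. f (m * x - real k)) has_integral (1 / m) * seg b p q)
          ((\<lambda>x. (1 / m) * x + real k / m) ` {0..1})"
    by simp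
  also have "(\<lambda>x. (1 / m) * x + real k / m) ` {0..1} = {real k * T / real M .. real (Suc k) * T / real M}"
  proof -
    have A: "(\<lambda>x. (1 / m) * x + real k / m) ` {0..1} = {real k / m .. 1 / m + real k / m}"
      using m by (subst image_affinity_atLeastAtMost) simp
    have e1: "real k / m = real k * T / real M" using T M by (simp add: m_def)
    have e2: "1 / m + real k * T / real M = real (Suc k) * T / real M"
      using T M by (simp add: m_def add_divide_distrib algebra_simps)
    show ?thesis by (rule trans[OF A]) (simp only: e1 e2)
  qed
  finally have "((\<lambda>x. m * f (m * x - real k)) has_integral m * ((1 / m) * seg b p q)) {real k * T / real M .. real (Suc k) * T / real M}"
    by (rule has_integral_mult_right)
  moreover have "m * f (m * x - real k) = b (p + (x * real M / T - real k) *\<^sub>R (q - p)) \<bullet> ((real M / T) *\<^sub>R (q - p))" for x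
  proof -
    have e: "real M / T * x = x * real M / T" by simp
    show ?thesis unfolding f_def m_def inner_scaleR_right e by (rule refl)
  qed
  ultimately show ?thesis using m by simp
qed



lemma aff_norm_le:
  fixes p q :: "'a::real_normed_vector"
  assumes "0 \<le> th" "th \<le> 1" "norm p \<le> R" "norm q \<le> R"
  shows "norm (p + th *\<^sub>R (q - p)) \<le> R"
proof -
  have "p + th *\<^sub>R (q - p) = (1 - th) *\<^sub>R p + th *\<^sub>R q" by (simp add: algebra_simps)
  also have "norm \<dots> \<le> (1 - th) * norm p + th * norm q"
    using assms by (metis (no_types, lifting) abs_of_nonneg diff_ge_0_iff_ge norm_scaleR norm_triangle_ineq order_trans)
  also have "\<dots> \<le> (1 - th) * R + th * R"
    using assms by (intro add_mono mult_left_mono) auto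
  finally show ?thesis by (simp add: algebra_simps)
qed

lemma pgon_main:
  fixes v :: "nat \<Rightarrow> 'a::euclidean_space" and b c :: "'a \<Rightarrow> 'a"
  assumes cb: "continuous_on UNIV b" and cc: "continuous_on UNIV c" and T: "T > 0" and M: "M > 0"
    and E: "\<And>k. k < M \<Longrightarrow> norm (v (Suc k) - v k) \<le> E"
    and R: "\<And>k. k \<le> M \<Longrightarrow> norm (v k) \<le> R"
    and Bc: "\<And>z. norm z \<le> R \<Longrightarrow> norm (c z) \<le> Bc"
  shows "pgon T M v \<in> H_space T"
    and "((\<lambda>t. b (pgon T M v t) \<bullet> pdot T (pgon T M v) t) has_integral (\<Sum>k<M. seg b (v k) (v (Suc k)))) {0..T}"
    and "rate_I c T (pgon T M v) \<le> (real M)\<^sup>2 * E\<^sup>2 / T + T * Bc\<^sup>2"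
proof -
  define \<phi> where "\<phi> = pgon T M v"
  define aff where "aff k t = v k + (t * real M / T - real k) *\<^sub>R (v (Suc k) - v k)" for k t
  define d where "d k = (real M / T) *\<^sub>R (v (Suc k) - v k)" for k
  have Mr: "real M > 0" using M by simp
  have phi_eq: "\<phi> t = aff k t" "pdot T \<phi> t = d k"
    if "k < M" "real k * T / real M < t" "t < real (Suc k) * T / real M" for k t
    using that pgon_piece[OF T, of k M t v] pgon_pdot[OF T, of k M t v]
    unfolding \<phi>_def aff_def d_def by auto
  have aff_cont: "continuous_on S (aff k)" for k S
    unfolding aff_def using T by (intro continuous_intros) auto
  have th: "0 \<le> t * real M / T - real k \<and> t * real M / T - real k \<le> 1"
    if "t \<in> {real k * T / real M .. real (Suc k) * T / real M}" for k t
  proof -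
    have "real k * T \<le> t * real M" "t * real M \<le> real (Suc k) * T"
      using that Mr by (auto simp: field_simps)
    then show ?thesis using T by (auto simp: field_simps)
  qed
  have aff_R: "norm (aff k t) \<le> R" if "k < M" "t \<in> {real k * T / real M .. real (Suc k) * T / real M}" for k t
    unfolding aff_def using th[OF that(2)] R[of k] R[of "Suc k"] that(1)
    by (intro aff_norm_le) auto
  have int_sq: "((\<lambda>t. (norm (pdot T \<phi> t))\<^sup>2) has_integral
      (\<Sum>k<M. integral {real k * T / real M .. real (Suc k) * T / real M} (\<lambda>t. (norm (d k))\<^sup>2))) {0..T}"
    by (rule piecewise_has_integral[OF T M]) (auto simp: phi_eq)
  show "pgon T M v \<in> H_space T"
    unfolding H_space_def using pgon_abs_cont[OF T] int_sq unfolding \<phi>_def by blast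
  have "((\<lambda>t. b (\<phi> t) \<bullet> pdot T \<phi> t) has_integral
      (\<Sum>k<M. integral {real k * T / real M .. real (Suc k) * T / real M} (\<lambda>t. b (aff k t) \<bullet> d k))) {0..T}"
  proof (rule piecewise_has_integral[OF T M])
    fix k assume "k < M"
    show "continuous_on {real k * T / real M .. real (Suc k) * T / real M} (\<lambda>t. b (aff k t) \<bullet> d k)"
      by (intro continuous_intros continuous_on_compose2[OF cb aff_cont]) auto
  qed (auto simp: phi_eq)
  moreover have "integral {real k * T / real M .. real (Suc k) * T / real M} (\<lambda>t. b (aff k t) \<bullet> d k)
      = seg b (v k) (v (Suc k))" for k
    unfolding aff_def d_def by (rule integral_unique[OF seg_piece[OF cb T M]])
  ultimately show "((\<lambda>t. b (pgon T M v t) \<bullet> pdot T (pgon T M v) t) has_integral (\<Sum>k<M. seg b (v k) (v (Suc k)))) {0..T}"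
    unfolding \<phi>_def by simp
  define K where "K = 2 * ((real M / T) * E)\<^sup>2 + 2 * Bc\<^sup>2"
  have "((\<lambda>t. (norm (pdot T \<phi> t - c (\<phi> t)))\<^sup>2) has_integral
      (\<Sum>k<M. integral {real k * T / real M .. real (Suc k) * T / real M} (\<lambda>t. (norm (d k - c (aff k t)))\<^sup>2))) {0..T}"
  proof (rule piecewise_has_integral[OF T M])
    fix k assume "k < M"
    show "continuous_on {real k * T / real M .. real (Suc k) * T / real M} (\<lambda>t. (norm (d k - c (aff k t)))\<^sup>2)"
      by (intro continuous_intros continuous_on_compose2[OF cc aff_cont]) auto
  qed (auto simp: phi_eq)
  then have "integral {0..T} (\<lambda>t. (norm (pdot T \<phi> t - c (\<phi> t)))\<^sup>2)
     = (\<Sum>k<M. integral {real k * T / real M .. real (Suc k) * T / real M} (\<lambda>t. (norm (d k - c (aff k t)))\<^sup>2))"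
    by (rule integral_unique)
  also have "\<dots> \<le> (\<Sum>k<M. K * (T / real M))"
  proof (rule sum_mono)
    fix k assume k: "k \<in> {..<M}"
    let ?I = "{real k * T / real M .. real (Suc k) * T / real M}"
    have "integral ?I (\<lambda>t. (norm (d k - c (aff k t)))\<^sup>2) \<le> integral ?I (\<lambda>t. K)"
    proof (rule integral_le)
      show "(\<lambda>t. (norm (d k - c (aff k t)))\<^sup>2) integrable_on ?I"
        by (intro integrable_continuous_interval continuous_intros continuous_on_compose2[OF cc aff_cont]) auto
      show "(\<lambda>t. K) integrable_on ?I" by (rule integrable_continuous_interval[OF continuous_on_const])
      fix t assume t: "t \<in> ?I"
      have n1: "norm (d k) \<le> (real M / T) * E"
        unfolding d_def using E[of k] k T by (auto intro!: mult_left_mono divide_right_mono)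
      have n2: "norm (c (aff k t)) \<le> Bc" using Bc aff_R[of k t] k t by auto
      have "norm (d k - c (aff k t)) \<le> norm (d k) + norm (c (aff k t))" by (rule norm_triangle_ineq4)
      then have "(norm (d k - c (aff k t)))\<^sup>2 \<le> (norm (d k) + norm (c (aff k t)))\<^sup>2"
        by (intro power_mono) auto
      also have "\<dots> \<le> 2 * (norm (d k))\<^sup>2 + 2 * (norm (c (aff k t)))\<^sup>2"
        by (smt (verit, best) sum_squares_bound power2_sum)
      also have "\<dots> \<le> K" unfolding K_def
        using n1 n2 by (intro add_mono mult_left_mono power_mono) auto
      finally show "(norm (d k - c (aff k t)))\<^sup>2 \<le> K" .
    qed
    also have "\<dots> = K * (T / real M)"
      using T Mr by (simp add: field_simps)
    finally show "integral ?I (\<lambda>t. (norm (d k - c (aff k t)))\<^sup>2) \<le> K * (T / real M)" .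
  qed
  also have "\<dots> = K * T" using Mr by simp
  finally have "rate_I c T \<phi> \<le> (1/2) * (K * T)"
    unfolding rate_I_def by simp
  also have "\<dots> = (real M)\<^sup>2 * E\<^sup>2 / T + T * Bc\<^sup>2"
    unfolding K_def using T by (simp add: field_simps power2_eq_square)
  finally show "rate_I c T (pgon T M v) \<le> (real M)\<^sup>2 * E\<^sup>2 / T + T * Bc\<^sup>2"
    unfolding \<phi>_def .
qed



lemma seg_cont:
  assumes cb: "continuous_on UNIV b"
    and Lb: "\<And>u v. norm (b u - b v) \<le> Lb * norm (u - v)"
    and B: "\<And>u. norm (b u) \<le> B" and Lb0: "Lb \<ge> 0"
    and cp: "continuous_on S p" and cq: "continuous_on S q"
  shows "continuous_on S (\<lambda>s. seg b (p s) (q s))"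
  unfolding continuous_on_def
proof
  fix s0 assume s0: "s0 \<in> S"
  define K where "K = Lb * norm (q s0 - p s0) + B"
  have pl: "(p \<longlongrightarrow> p s0) (at s0 within S)" using cp s0 by (simp add: continuous_on_def)
  have ql: "(q \<longlongrightarrow> q s0) (at s0 within S)" using cq s0 by (simp add: continuous_on_def)
  have "((\<lambda>s. seg b (p s) (q s) - seg b (p s0) (q s0)) \<longlongrightarrow> 0) (at s0 within S)"
  proof (rule Lim_null_comparison)
    show "\<forall>\<^sub>F s in at s0 within S. norm (seg b (p s) (q s) - seg b (p s0) (q s0)) \<le> K * (norm (p s - p s0) + norm (q s - q s0))"
    proof (rule always_eventually, rule allI)
      fix s
      have "\<bar>seg b (p s0) (q s0) - seg b (p s) (q s)\<bar> \<le> K * (norm (p s0 - p s) + norm (q s0 - q s))"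
        unfolding K_def by (rule seg_lip[OF cb Lb B Lb0])
      then show "norm (seg b (p s) (q s) - seg b (p s0) (q s0)) \<le> K * (norm (p s - p s0) + norm (q s - q s0))"
        by (simp add: abs_minus_commute norm_minus_commute)
    qed
    have "((\<lambda>s. K * (norm (p s - p s0) + norm (q s - q s0))) \<longlongrightarrow> K * (norm (p s0 - p s0) + norm (q s0 - q s0))) (at s0 within S)"
      by (intro tendsto_intros pl ql)
    then show "((\<lambda>s. K * (norm (p s - p s0) + norm (q s - q s0))) \<longlongrightarrow> 0) (at s0 within S)" by simp
  qed
  then show "((\<lambda>s. seg b (p s) (q s)) \<longlongrightarrow> seg b (p s0) (q s0)) (at s0 within S)"
    by (rule LIM_zero_cancel)
qed

lemma sum_triples:
  fixes f :: "nat \<Rightarrow> real"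
  shows "(\<Sum>k<3 * n + 1. f k) = f 0 + (\<Sum>i<n. f (3 * i + 1) + f (3 * i + 2) + f (3 * i + 3))"
proof (induction n)
  case 0 then show ?case by simp
next
  case (Suc n)
  have "3 * Suc n + 1 = Suc (Suc (Suc (3 * n + 1)))" by simp
  then have "(\<Sum>k<3 * Suc n + 1. f k) = (\<Sum>k<3 * n + 1. f k) + f (3 * n + 1) + f (3 * n + 2) + f (3 * n + 3)"
    by (simp add: add.assoc numeral_3_eq_3)
  then show ?case using Suc by simp
qed

lemma rate_nonneg: "rate_I c T \<phi> \<ge> 0"
proof (cases "(\<lambda>t. (norm (pdot T \<phi> t - c (\<phi> t)))\<^sup>2) integrable_on {0..T}")
  case True then show ?thesis unfolding rate_I_def by (simp add: integral_nonneg)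
next
  case False then show ?thesis unfolding rate_I_def by (simp add: not_integrable_integral)
qed



lemma construct:
  fixes b c :: "'a::euclidean_space \<Rightarrow> 'a"
  assumes cb: "continuous_on UNIV b" and cc: "continuous_on UNIV c"
    and Lb: "\<And>u v. norm (b u - b v) \<le> Lb * norm (u - v)"
    and B: "\<And>u. norm (b u) \<le> B" and Lb0: "Lb \<ge> 0"
    and k0: "\<kappa>0 > 0"
    and t1: "seg b y a1 + seg b a1 a2 + seg b a2 y = \<kappa>0"
    and t2: "seg b y a2 + seg b a2 a1 + seg b a1 y = - \<kappa>0"
    and Rdef: "R = norm x + norm y + norm a1 + norm a2"
    and Bc: "\<And>z. norm z \<le> R \<Longrightarrow> norm (c z) \<le> Bc"
    and T: "T > 0"
  shows "\<exists>\<phi> M. \<phi> \<in> A_set b T x y q \<and> real M \<le> 3 * (\<bar>q * T / 2 - seg b x y\<bar> / \<kappa>0) + 4 \<and>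
           rate_I c T \<phi> \<le> (real M)\<^sup>2 * (2 * R)\<^sup>2 / T + T * Bc\<^sup>2"
proof -
  define D where "D = q * T / 2 - seg b x y"
  obtain u1 u2 \<sigma> where u: "seg b y u1 + seg b u1 u2 + seg b u2 y = \<sigma>"
    and \<sigma>: "\<sigma> = (if D \<ge> 0 then \<kappa>0 else - \<kappa>0)" and nu: "norm u1 \<le> R" "norm u2 \<le> R"
  proof (cases "D \<ge> 0")
    case True
    show ?thesis by (rule that[of a1 a2 \<kappa>0]) (use t1 True Rdef in auto)
  next
    case False
    show ?thesis by (rule that[of a2 a1 "- \<kappa>0"]) (use t2 False Rdef in auto)
  qed
  have R0: "norm x \<le> R" "norm y \<le> R" using Rdef by auto
  define N where "N = nat \<lfloor>\<bar>D\<bar> / \<kappa>0\<rfloor>"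
  have z0: "0 \<le> \<lfloor>\<bar>D\<bar> / \<kappa>0\<rfloor>" using k0 by simp
  have fl: "real N = of_int \<lfloor>\<bar>D\<bar> / \<kappa>0\<rfloor>" unfolding N_def using z0 by simp
  have N1: "real N \<le> \<bar>D\<bar> / \<kappa>0" unfolding fl by (rule of_int_floor_le)
  have N2: "\<bar>D\<bar> / \<kappa>0 < real N + 1" unfolding fl by (rule real_of_int_floor_add_one_gt)
  have N1': "real N * \<kappa>0 \<le> \<bar>D\<bar>" using N1 k0 by (simp add: field_simps)
  have N2': "\<bar>D\<bar> < (real N + 1) * \<kappa>0" using N2 k0 by (simp add: field_simps)
  define w where "w s = u1 + s *\<^sub>R (u2 - u1)" for s :: real
  define g where "g s = seg b y u1 + seg b u1 (w s) + seg b (w s) y" for s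
  have wc: "continuous_on {0..1} w" unfolding w_def by (intro continuous_intros)
  have gc: "continuous_on {0..1} g"
    unfolding g_def
    by (intro continuous_intros seg_cont[OF cb Lb B Lb0] wc)
  have g0: "g 0 = 0" unfolding g_def w_def by (simp add: seg_same seg_rev[OF cb, of y u1])
  have g1: "g 1 = \<sigma>" unfolding g_def w_def using u by simp
  define r where "r = D - real N * \<sigma>"
  obtain s where s: "0 \<le> s" "s \<le> 1" "g s = r"
  proof (cases "D \<ge> 0")
    case True
    then have "g 0 \<le> r" "r \<le> g 1" using N1' N2' g0 g1 \<sigma> unfolding r_def by (auto simp: algebra_simps)
    from IVT'[OF this _ gc] show ?thesis using that by auto
  next
    case False
    then have "g 1 \<le> r" "r \<le> g 0" using N1' N2' g0 g1 \<sigma> unfolding r_def by (auto simp: algebra_simps)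
    from IVT2'[OF this _ gc] show ?thesis using that by auto
  qed
  define v where "v k = (if k = 0 then x else if (k - 1) mod 3 = 0 then y
      else if (k - 1) mod 3 = 1 then u1 else if (k - 1) div 3 = N then w s else u2)" for k
  define M where "M = 3 * N + 4"
  have M0: "M > 0" unfolding M_def by simp
  have vR: "norm (v k) \<le> R" for k
  proof -
    have "norm (w s) \<le> R" unfolding w_def using s nu by (intro aff_norm_le) auto
    then show ?thesis unfolding v_def using R0 nu by auto
  qed
  have vE: "norm (v (Suc k) - v k) \<le> 2 * R" for k
    using norm_triangle_ineq4[of "v (Suc k)" "v k"] vR[of k] vR[of "Suc k"] by simp
  have v0: "v 0 = x" unfolding v_def by simp
  have vM: "v M = y"
  proof -
    have "M - 1 = 3 * (N + 1)" "M \<noteq> 0" unfolding M_def by simp_all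
    then show ?thesis unfolding v_def by simp
  qed
  have trip: "seg b (v (3 * i + 1)) (v (3 * i + 2)) + seg b (v (3 * i + 2)) (v (3 * i + 3)) + seg b (v (3 * i + 3)) (v (3 * i + 4))
      = (if i = N then g s else \<sigma>)" for i
  proof -
    have e1: "3 * i + 1 - 1 = 3 * i" "3 * i + 2 - 1 = 3 * i + 1" "3 * i + 3 - 1 = 3 * i + 2" "3 * i + 4 - 1 = 3 * i + 3"
      by simp_all
    have e2: "(3 * i) mod 3 = 0" "(3 * i + 1) mod 3 = 1" "(3 * i + 2) mod 3 = 2" "(3 * i + 3) mod 3 = 0"
      "(3 * i + 2) div 3 = i" by presburger+
    have a: "v (3 * i + 1) = y" unfolding v_def e1 e2 by simp
    have b: "v (3 * i + 2) = u1" unfolding v_def e1 e2 by simp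
    have c: "v (3 * i + 3) = (if i = N then w s else u2)" unfolding v_def e1 e2 by simp
    have d: "v (3 * i + 4) = y" unfolding v_def e1 e2 by simp
    show ?thesis unfolding a b c d g_def using u by auto
  qed
  have "(\<Sum>k<M. seg b (v k) (v (Suc k))) = seg b x y + (\<Sum>i<Suc N. (if i = N then g s else \<sigma>))"
  proof -
    have "M = 3 * Suc N + 1" unfolding M_def by simp
    then have "(\<Sum>k<M. seg b (v k) (v (Suc k))) = seg b (v 0) (v 1) + (\<Sum>i<Suc N. seg b (v (3 * i + 1)) (v (3 * i + 2)) + seg b (v (3 * i + 2)) (v (3 * i + 3)) + seg b (v (3 * i + 3)) (v (3 * i + 4)))"
      using sum_triples[of "\<lambda>k. seg b (v k) (v (Suc k))" "Suc N"] by (simp add: add.assoc numeral_eq_Suc)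
    also have "v 1 = y" unfolding v_def by simp
    finally show ?thesis using trip v0 by simp
  qed
  also have "(\<Sum>i<Suc N. (if i = N then g s else \<sigma>)) = real N * \<sigma> + g s"
  proof -
    have "(\<Sum>i<N. (if i = N then g s else \<sigma>)) = (\<Sum>i<N. \<sigma>)" by (intro sum.cong) auto
    then show ?thesis by simp
  qed
  finally have sumv: "(\<Sum>k<M. seg b (v k) (v (Suc k))) = q * T / 2"
    using s unfolding r_def D_def by simp
  define \<phi> where "\<phi> = pgon T M v"
  have vE': "\<And>k. k < M \<Longrightarrow> norm (v (Suc k) - v k) \<le> 2 * R" using vE by blast
  have vR': "\<And>k. k \<le> M \<Longrightarrow> norm (v k) \<le> R" using vR by blast
  note main = pgon_main[where v=v and E="2 * R" and R=R and Bc=Bc, OF cb cc T M0 vE' vR' Bc, folded \<phi>_def]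
  have "L_fun b T \<phi> = q"
    unfolding L_fun_def using integral_unique[OF main(2)] sumv T by (simp add: field_simps)
  moreover have "\<phi> 0 = x" "\<phi> T = y" unfolding \<phi>_def using pgon_0 pgon_T[OF T] v0 vM by auto
  ultimately have "\<phi> \<in> A_set b T x y q"
    unfolding A_set_def H_space_from_def using main(1) by auto
  moreover have "real M \<le> 3 * (\<bar>q * T / 2 - seg b x y\<bar> / \<kappa>0) + 4"
    using N1 unfolding M_def D_def by simp
  ultimately show ?thesis using main(3) by blast
qed



theorem lemma5p2:
  fixes V :: "'a::euclidean_space \<Rightarrow> real"
    and gradV :: "'a \<Rightarrow> 'a"
    and b :: "'a \<Rightarrow> 'a"
    and q :: real and x y :: 'a
  assumes gradV: "\<And>z. (V has_derivative (\<lambda>h. gradV z \<bullet> h)) (at z)"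
    and V_C2: "C1_map gradV"
    and V_coercive: "filterlim (\<lambda>z. (gradV z \<bullet> z) / norm z) at_top at_infinity"
    and b_C1: "\<exists>b'::'a \<Rightarrow> 'a \<Rightarrow>\<^sub>L 'a. (\<forall>z. (b has_derivative blinfun_apply (b' z)) (at z))
                  \<and> continuous_on UNIV b' \<and> bounded (range b')"
    and b_bounded: "bounded (range b)"
    and b_not_conservative: "\<not> (\<exists>U::'a \<Rightarrow> real. \<forall>z. (U has_derivative (\<lambda>h. b z \<bullet> h)) (at z))"
    and orth: "\<And>z. gradV z \<bullet> b z = 0"
  shows "(\<forall>T>0. A_set b T x y q \<noteq> {}) \<and>
         (\<exists>T0>0. \<exists>C>0. \<forall>T\<ge>T0.
            S_fun (\<lambda>z. - (1/2) *\<^sub>R gradV z + b z) b T x y q \<le> C * T)"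
proof -
  obtain b' :: "'a \<Rightarrow> 'a \<Rightarrow>\<^sub>L 'a" where bder: "\<And>z. (b has_derivative blinfun_apply (b' z)) (at z)"
    and b'bd: "bounded (range b')" using b_C1 by blast
  obtain Lb where Lb': "\<And>z. norm (b' z) \<le> Lb" using b'bd unfolding bounded_iff by blast
  have Lb0: "Lb \<ge> 0" using Lb'[of 0] norm_ge_zero[of "b' 0"] by linarith
  have Lb: "norm (b u - b v) \<le> Lb * norm (u - v)" for u v
  proof (rule differentiable_bound[of UNIV b "\<lambda>z. blinfun_apply (b' z)" Lb])
    show "\<And>z. z \<in> UNIV \<Longrightarrow> (b has_derivative blinfun_apply (b' z)) (at z within UNIV)"
      using bder by simp
    show "\<And>z. z \<in> UNIV \<Longrightarrow> onorm (blinfun_apply (b' z)) \<le> Lb"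
      using Lb' by (simp add: norm_blinfun.rep_eq[symmetric])
  qed auto
  have cb: "continuous_on UNIV b"
    using bder by (intro continuous_at_imp_continuous_on) (auto intro: has_derivative_continuous)
  obtain B where B: "\<And>u. norm (b u) \<le> B" using b_bounded unfolding bounded_iff by blast
  obtain g' :: "'a \<Rightarrow> 'a \<Rightarrow>\<^sub>L 'a" where gder: "\<And>z. (gradV has_derivative blinfun_apply (g' z)) (at z)"
    using V_C2 unfolding C1_map_def by blast
  have cg: "continuous_on UNIV gradV"
    using gder by (intro continuous_at_imp_continuous_on) (auto intro: has_derivative_continuous)
  define c where "c z = - (1/2) *\<^sub>R gradV z + b z" for z
  have cc: "continuous_on UNIV c" unfolding c_def by (intro continuous_intros cg cb)
  obtain z1 z2 where tz: "seg b y z1 + seg b z1 z2 + seg b z2 y \<noteq> 0"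
    using nonconservative_triangle[OF cb Lb Lb0 b_not_conservative] by blast
  have trev: "seg b y z2 + seg b z2 z1 + seg b z1 y = - (seg b y z1 + seg b z1 z2 + seg b z2 y)"
    using seg_rev[OF cb, of y z2] seg_rev[OF cb, of z2 z1] seg_rev[OF cb, of z1 y] by simp
  define \<kappa>0 where "\<kappa>0 = \<bar>seg b y z1 + seg b z1 z2 + seg b z2 y\<bar>"
  have k0: "\<kappa>0 > 0" using tz unfolding \<kappa>0_def by simp
  obtain a1 a2 where t1: "seg b y a1 + seg b a1 a2 + seg b a2 y = \<kappa>0"
    and t2: "seg b y a2 + seg b a2 a1 + seg b a1 y = - \<kappa>0"
  proof (cases "seg b y z1 + seg b z1 z2 + seg b z2 y > 0")
    case True then show ?thesis using that[of z1 z2] trev unfolding \<kappa>0_def by auto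
  next
    case False then show ?thesis using that[of z2 z1] trev unfolding \<kappa>0_def by auto
  qed
  define R where "R = norm x + norm y + norm a1 + norm a2"
  have "bounded (c ` cball 0 R)"
    by (intro compact_imp_bounded compact_continuous_image continuous_on_subset[OF cc]) auto
  then obtain Bc where Bc': "\<And>u. u \<in> c ` cball 0 R \<Longrightarrow> norm u \<le> Bc" unfolding bounded_iff by blast
  have Bc: "norm (c z) \<le> Bc" if "norm z \<le> R" for z using Bc'[of "c z"] that by auto
  have con: "\<exists>\<phi> M. \<phi> \<in> A_set b T x y q' \<and> real M \<le> 3 * (\<bar>q' * T / 2 - seg b x y\<bar> / \<kappa>0) + 4 \<and>
           rate_I c T \<phi> \<le> (real M)\<^sup>2 * (2 * R)\<^sup>2 / T + T * Bc\<^sup>2" if "T > 0" for T q'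
    by (rule construct[where c=c and R=R and Bc=Bc, OF cb cc Lb B Lb0 k0 t1 t2 R_def Bc that])
  have part1: "\<forall>T>0. A_set b T x y q \<noteq> {}"
    using con by blast
  define \<alpha> where "\<alpha> = 3 * ((\<bar>q\<bar> / 2 + \<bar>seg b x y\<bar>) / \<kappa>0) + 4"
  define C where "C = \<alpha>\<^sup>2 * (2 * R)\<^sup>2 + Bc\<^sup>2 + 1"
  have C0: "C > 0" unfolding C_def by (simp add: add_nonneg_pos)
  have part2: "S_fun c b T x y q \<le> C * T" if T1: "T \<ge> 1" for T
  proof -
    have T: "T > 0" using T1 by simp
    obtain \<phi> M where \<phi>: "\<phi> \<in> A_set b T x y q" and Mb: "real M \<le> 3 * (\<bar>q * T / 2 - seg b x y\<bar> / \<kappa>0) + 4"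
      and rt: "rate_I c T \<phi> \<le> (real M)\<^sup>2 * (2 * R)\<^sup>2 / T + T * Bc\<^sup>2"
      using con[OF T] by blast
    have ab: "\<bar>q * T / 2 - seg b x y\<bar> \<le> (\<bar>q\<bar> / 2 + \<bar>seg b x y\<bar>) * T"
    proof -
      have "\<bar>q * T / 2 - seg b x y\<bar> \<le> \<bar>q\<bar> / 2 * T + \<bar>seg b x y\<bar>"
      proof -
        have "\<bar>q * T / 2\<bar> = \<bar>q\<bar> / 2 * T" using T by (simp add: abs_mult)
        then show ?thesis using abs_triangle_ineq4[of "q * T / 2" "seg b x y"] by linarith
      qed
      also have "\<bar>seg b x y\<bar> \<le> \<bar>seg b x y\<bar> * T" using T1 by (simp add: mult_le_cancel_left1)
      finally show ?thesis by (simp add: algebra_simps)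
    qed
    have "3 * (\<bar>q * T / 2 - seg b x y\<bar> / \<kappa>0) \<le> 3 * ((\<bar>q\<bar> / 2 + \<bar>seg b x y\<bar>) / \<kappa>0) * T"
    proof -
      from divide_right_mono[OF ab, of \<kappa>0] k0
      have "\<bar>q * T / 2 - seg b x y\<bar> / \<kappa>0 \<le> (\<bar>q\<bar> / 2 + \<bar>seg b x y\<bar>) * T / \<kappa>0" by simp
      moreover have "(\<bar>q\<bar> / 2 + \<bar>seg b x y\<bar>) * T / \<kappa>0 = (\<bar>q\<bar> / 2 + \<bar>seg b x y\<bar>) / \<kappa>0 * T" by simp
      ultimately show ?thesis by linarith
    qed
    then have MT: "real M \<le> \<alpha> * T" using Mb T1 unfolding \<alpha>_def by (simp add: algebra_simps)
    then have "(real M)\<^sup>2 \<le> (\<alpha> * T)\<^sup>2" by (intro power_mono) auto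
    then have "(real M)\<^sup>2 * (2 * R)\<^sup>2 / T \<le> (\<alpha> * T)\<^sup>2 * (2 * R)\<^sup>2 / T"
      using T by (intro divide_right_mono mult_right_mono) auto
    also have "\<dots> = \<alpha>\<^sup>2 * (2 * R)\<^sup>2 * T" using T by (simp add: power2_eq_square)
    finally have "rate_I c T \<phi> \<le> \<alpha>\<^sup>2 * (2 * R)\<^sup>2 * T + T * Bc\<^sup>2" using rt by linarith
    also have "\<dots> \<le> C * T" unfolding C_def using T by (simp add: algebra_simps)
    finally have r: "rate_I c T \<phi> \<le> C * T" .
    have "S_fun c b T x y q \<le> rate_I c T \<phi>"
      unfolding S_fun_def
    proof (rule cInf_lower)
      show "rate_I c T \<phi> \<in> rate_I c T ` A_set b T x y q" using \<phi> by simp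
      show "bdd_below (rate_I c T ` A_set b T x y q)"
        by (rule bdd_belowI[of _ 0]) (auto simp: rate_nonneg)
    qed
    then show ?thesis using r by linarith
  qed
  show ?thesis
    using part1 part2 C0 unfolding c_def by (intro conjI exI[of _ 1] exI[of _ C]) auto
qed

end
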